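(* Let $A$ be an associative unital algebra over a commutative ring $k$ and $B$ a subalgebra with $L(A)\subseteq B\subseteq\mathrm{End}_k(A)$. Suppose $A^B$ is a domain and $A^B$ is large in $A$, and that either (1) $A$ is uniform as a left $A$-module (i.e. $\mathrm{udim}(A)=1$), or (2) $S=A^B\setminus\{0\}$ is left permutable in $A$ (for all $a\in A$ and $s\in S$ there exist $y\in S$ and $b\in A$ with $bs=ya$) and every $s\in S$ is a left non-zero divisor of $A$ (i.e. $sc=0$ with $c\in A$ implies $c=0$). Then $A$ is a critically compressible left $B$-module.
   Context: $L(A)=\{L_a:a\in A\}$, $L_a(x)=ax$; $A$ is a left $B$-module via $\varphi\cdot a=\varphi(a)$; its $B$-submodules are the $B$-stable left ideals. $A^B=\{a\in A: b\cdot a=(b\cdot1)a\ \forall b\in B\}$, which is isomorphic to $\mathrm{End}_B(A)$ via $f\mapsto(1)f$. $A^B$ is large in $A$ if $A^B\cap I\neq0$ for every nonzero $B$-submodule $I$ of $A$ (equivalently, $A$ is a retractable left $B$-module). A nonzero module is critically compressible if it embeds into each of its nonzero submodules and into none of its factor modules $M/N$ with $N\neq0$. *)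

theory Defs
  imports Main "HOL.Modules"
begin

text \<open>An associative unital algebra over a commutative ring: the ring structure comes
from the type class ring_1 on 'a, the k-module structure from scale.\<close>
definition algebra_over :: "('k::comm_ring_1 \<Rightarrow> 'a::ring_1 \<Rightarrow> 'a) \<Rightarrow> bool" where
  "algebra_over scale \<longleftrightarrow> module scale \<and>
     (\<forall>r x y. scale r (x * y) = scale r x * y \<and> scale r (x * y) = x * scale r y)"

definition End_k :: "('k::comm_ring_1 \<Rightarrow> 'a::ring_1 \<Rightarrow> 'a) \<Rightarrow> ('a \<Rightarrow> 'a) set" where
  "End_k scale = {f. module_hom scale scale f}"

definition subalgebra_End :: "('k::comm_ring_1 \<Rightarrow> 'a::ring_1 \<Rightarrow> 'a) \<Rightarrow> ('a \<Rightarrow> 'a) set \<Rightarrow> bool" where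
  "subalgebra_End scale B \<longleftrightarrow> B \<subseteq> End_k scale \<and> id \<in> B \<and> (\<lambda>x. 0) \<in> B \<and>
     (\<forall>f\<in>B. \<forall>g\<in>B. (\<lambda>x. f x + g x) \<in> B) \<and>
     (\<forall>f\<in>B. (\<lambda>x. - f x) \<in> B) \<and>
     (\<forall>f\<in>B. \<forall>g\<in>B. f \<circ> g \<in> B) \<and>
     (\<forall>r. \<forall>f\<in>B. (\<lambda>x. scale r (f x)) \<in> B)"

definition Lmult :: "('a::ring_1 \<Rightarrow> 'a) set" where
  "Lmult = {(\<lambda>x. a * x) | a. True}"

definition add_subgroup :: "'a::ring_1 set \<Rightarrow> bool" where
  "add_subgroup I \<longleftrightarrow> 0 \<in> I \<and> (\<forall>x\<in>I. \<forall>y\<in>I. x + y \<in> I) \<and> (\<forall>x\<in>I. - x \<in> I)"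

text \<open>B-submodules of A (A is a left B-module via phi . a = phi(a)).\<close>
definition B_submodule :: "('a::ring_1 \<Rightarrow> 'a) set \<Rightarrow> 'a set \<Rightarrow> bool" where
  "B_submodule B I \<longleftrightarrow> add_subgroup I \<and> (\<forall>\<phi>\<in>B. \<forall>x\<in>I. \<phi> x \<in> I)"

definition left_ideal :: "'a::ring_1 set \<Rightarrow> bool" where
  "left_ideal I \<longleftrightarrow> add_subgroup I \<and> (\<forall>a x. x \<in> I \<longrightarrow> a * x \<in> I)"

definition inv_B :: "('a::ring_1 \<Rightarrow> 'a) set \<Rightarrow> 'a set" where
  "inv_B B = {a. \<forall>b\<in>B. b a = b 1 * a}"

definition is_domain_sub :: "'a::ring_1 set \<Rightarrow> bool" where
  "is_domain_sub S \<longleftrightarrow> (1::'a) \<noteq> 0 \<and> (\<forall>x\<in>S. \<forall>y\<in>S. x * y = 0 \<longrightarrow> x = 0 \<or> y = 0)"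

definition large_in :: "('a::ring_1 \<Rightarrow> 'a) set \<Rightarrow> bool" where
  "large_in B \<longleftrightarrow> (\<forall>I. B_submodule B I \<and> I \<noteq> {0} \<longrightarrow> inv_B B \<inter> I \<noteq> {0})"

definition uniform_ring :: "'a::ring_1 itself \<Rightarrow> bool" where
  "uniform_ring _ \<longleftrightarrow> (UNIV::'a set) \<noteq> {0} \<and>
     (\<forall>I J::'a set. left_ideal I \<and> left_ideal J \<and> I \<noteq> {0} \<and> J \<noteq> {0} \<longrightarrow> I \<inter> J \<noteq> {0})"

definition left_permutable :: "'a::ring_1 set \<Rightarrow> bool" where
  "left_permutable S \<longleftrightarrow> (\<forall>a. \<forall>s\<in>S. \<exists>y\<in>S. \<exists>b. b * s = y * a)"

definition left_nonzero_divisor :: "'a::ring_1 \<Rightarrow> bool" where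
  "left_nonzero_divisor s \<longleftrightarrow> (\<forall>c. s * c = 0 \<longrightarrow> c = 0)"

definition B_hom :: "('a::ring_1 \<Rightarrow> 'a) set \<Rightarrow> ('a \<Rightarrow> 'a) \<Rightarrow> bool" where
  "B_hom B f \<longleftrightarrow> (\<forall>x y. f (x + y) = f x + f y) \<and> (\<forall>\<phi>\<in>B. \<forall>x. f (\<phi> x) = \<phi> (f x))"

definition embeds_into_sub :: "('a::ring_1 \<Rightarrow> 'a) set \<Rightarrow> 'a set \<Rightarrow> bool" where
  "embeds_into_sub B N \<longleftrightarrow> (\<exists>f. B_hom B f \<and> inj f \<and> range f \<subseteq> N)"

text \<open>A embeds into the factor module A/N.  A map A -> A/N is given by a choice of
representatives f, i.e. x maps to the coset f x + N; B-linearity and injectivity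
are then expressed modulo N.\<close>
definition embeds_into_quot :: "('a::ring_1 \<Rightarrow> 'a) set \<Rightarrow> 'a set \<Rightarrow> bool" where
  "embeds_into_quot B N \<longleftrightarrow> (\<exists>f.
     (\<forall>x y. f (x + y) - (f x + f y) \<in> N) \<and>
     (\<forall>\<phi>\<in>B. \<forall>x. f (\<phi> x) - \<phi> (f x) \<in> N) \<and>
     (\<forall>x. f x \<in> N \<longrightarrow> x = 0))"

definition critically_compressible :: "('a::ring_1 \<Rightarrow> 'a) set \<Rightarrow> bool" where
  "critically_compressible B \<longleftrightarrow> (UNIV::'a set) \<noteq> {0} \<and>
     (\<forall>N. B_submodule B N \<and> N \<noteq> {0} \<longrightarrow> embeds_into_sub B N) \<and>
     (\<forall>N. B_submodule B N \<and> N \<noteq> {0} \<longrightarrow> \<not> embeds_into_quot B N)"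

end

theory Submission
  imports Defs
begin

theorem lemma3p4:
  fixes scale :: "'k::comm_ring_1 \<Rightarrow> 'a::ring_1 \<Rightarrow> 'a"
    and B :: "('a \<Rightarrow> 'a) set"
  assumes "algebra_over scale"
    and "subalgebra_End scale B"
    and "Lmult \<subseteq> B"
    and "is_domain_sub (inv_B B)"
    and "large_in B"
    and "uniform_ring TYPE('a) \<or>
         (left_permutable (inv_B B - {0}) \<and> (\<forall>s\<in>inv_B B - {0}. left_nonzero_divisor s))"
  shows "critically_compressible B"
proof -
  have hom: "\<And>b. b \<in> B \<Longrightarrow> module_hom scale scale b"
    using assms(2) unfolding subalgebra_End_def End_k_def by blast
  have b0: "\<And>b. b \<in> B \<Longrightarrow> b 0 = 0" using hom module_hom.zero by blast
  have badd: "\<And>b x y. b \<in> B \<Longrightarrow> b (x + y) = b x + b y" using hom module_hom.add by blast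
  have comp: "\<And>f g. f \<in> B \<Longrightarrow> g \<in> B \<Longrightarrow> f \<circ> g \<in> B"
    using assms(2) unfolding subalgebra_End_def by blast
  have L: "\<And>a. (\<lambda>x. a * x) \<in> B" using assms(3) unfolding Lmult_def by blast
  have one: "(1::'a) \<noteq> 0" using assms(4) unfolding is_domain_sub_def by blast
  have zinv: "0 \<in> inv_B B" unfolding inv_B_def using b0 by simp
  have dom: "\<And>x y. x \<in> inv_B B \<Longrightarrow> y \<in> inv_B B \<Longrightarrow> x * y = 0 \<Longrightarrow> x = 0 \<or> y = 0"
    using assms(4) unfolding is_domain_sub_def by blast
  have right: "\<And>b x a. b \<in> B \<Longrightarrow> a \<in> inv_B B \<Longrightarrow> b (x * a) = b x * a"
  proof -
    fix b x a assume b: "b \<in> B" and a: "a \<in> inv_B B"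
    have "b \<circ> (\<lambda>y. x * y) \<in> B" using comp b L by blast
    then have "(b \<circ> (\<lambda>y. x * y)) a = (b \<circ> (\<lambda>y. x * y)) 1 * a"
      using a unfolding inv_B_def by blast
    then show "b (x * a) = b x * a" by simp
  qed
  have sub_ideal: "\<And>N. B_submodule B N \<Longrightarrow> x \<in> N \<Longrightarrow> a * x \<in> N" for x a
    unfolding B_submodule_def using L by blast
  have large: "\<And>N. B_submodule B N \<Longrightarrow> N \<noteq> {0} \<Longrightarrow> \<exists>s. s \<in> inv_B B \<and> s \<in> N \<and> s \<noteq> 0"
  proof -
    fix N assume N: "B_submodule B N" "N \<noteq> {0}"
    have "inv_B B \<inter> N \<noteq> {0}" using assms(5) N unfolding large_in_def by blast
    moreover have "0 \<in> N" using N(1) unfolding B_submodule_def add_subgroup_def by blast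
    ultimately show "\<exists>s. s \<in> inv_B B \<and> s \<in> N \<and> s \<noteq> 0" using zinv by blast
  qed
  have part1: "embeds_into_sub B N" if N: "B_submodule B N" "N \<noteq> {0}" for N
  proof -
    obtain s where s: "s \<in> inv_B B" "s \<in> N" "s \<noteq> 0" using large N by blast
    define I where "I = {x. x * s = 0}"
    have "B_submodule B I"
      unfolding B_submodule_def add_subgroup_def I_def
      using right[OF _ s(1)] b0 by (auto simp: distrib_right)
    have inj: "x * s = 0 \<Longrightarrow> x = 0" for x
    proof (rule ccontr)
      assume "x * s = 0" "x \<noteq> 0"
      then have "I \<noteq> {0}" unfolding I_def by blast
      then obtain t where t: "t \<in> inv_B B" "t \<in> I" "t \<noteq> 0" using large \<open>B_submodule B I\<close> by blast
      then show False using dom[OF t(1) s(1)] s(3) unfolding I_def by auto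
    qed
    have "B_hom B (\<lambda>x. x * s)"
      unfolding B_hom_def using right[OF _ s(1)] by (simp add: distrib_right)
    moreover have "inj (\<lambda>x. x * s)"
      by (rule injI) (metis inj right_minus_eq left_diff_distrib)
    moreover have "range (\<lambda>x. x * s) \<subseteq> N" using sub_ideal[OF N(1) s(2)] by blast
    ultimately show ?thesis unfolding embeds_into_sub_def by blast
  qed
  have part2: "\<not> embeds_into_quot B N" if N: "B_submodule B N" "N \<noteq> {0}" for N
  proof
    assume "embeds_into_quot B N"
    then obtain f where f2: "\<forall>\<phi>\<in>B. \<forall>x. f (\<phi> x) - \<phi> (f x) \<in> N"
      and f3: "\<forall>x. f x \<in> N \<longrightarrow> x = 0"
      unfolding embeds_into_quot_def by blast
    define u where "u = f 1"
    have addN: "\<And>x y. x \<in> N \<Longrightarrow> y \<in> N \<Longrightarrow> x + y \<in> N"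
      using N(1) unfolding B_submodule_def add_subgroup_def by blast
    have key: "x * u \<in> N \<Longrightarrow> x = 0" for x
    proof -
      assume xu: "x * u \<in> N"
      have "f ((\<lambda>y. x * y) 1) - (\<lambda>y. x * y) (f 1) \<in> N" using f2 L by blast
      then have "f x - x * u \<in> N" by (simp add: u_def)
      from addN[OF this xu] have "f x \<in> N" by simp
      then show "x = 0" using f3 by blast
    qed
    obtain s where s: "s \<in> inv_B B" "s \<in> N" "s \<noteq> 0" using large N by blast
    from assms(6) show False
    proof
      assume U: "uniform_ring TYPE('a)"
      define I where "I = {x * u | x. True}"
      have "left_ideal I" unfolding left_ideal_def add_subgroup_def I_def
        by (auto simp: mult.assoc[symmetric] distrib_right) (metis mult_zero_left, metis distrib_right, metis minus_mult_left)
      have "left_ideal N" using N(1) sub_ideal unfolding left_ideal_def B_submodule_def by blast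
      have "u \<noteq> 0" using key[of 1] one N(1) unfolding B_submodule_def add_subgroup_def by auto
      moreover have "u \<in> I" unfolding I_def by (rule CollectI, rule exI[where x=1]) simp
      ultimately have "I \<noteq> {0}" by blast
      have UU: "\<forall>I J::'a set. left_ideal I \<and> left_ideal J \<and> I \<noteq> {0} \<and> J \<noteq> {0} \<longrightarrow> I \<inter> J \<noteq> {0}"
        using U unfolding uniform_ring_def by (rule conjunct2)
      have "I \<inter> N \<noteq> {0}"
        using UU[rule_format, of I N] \<open>left_ideal I\<close> \<open>left_ideal N\<close> N(2) \<open>I \<noteq> {0}\<close> by simp
      moreover have "0 \<in> N" using N(1) unfolding B_submodule_def add_subgroup_def by simp
      moreover have "0 \<in> I" unfolding I_def by (rule CollectI, rule exI[where x=0]) simp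
      ultimately obtain z where "z \<in> I" "z \<in> N" "z \<noteq> 0" by blast
      then obtain x where "z = x * u" unfolding I_def by blast
      then show False using key[of x] \<open>z \<in> N\<close> \<open>z \<noteq> 0\<close> by simp
    next
      assume P: "left_permutable (inv_B B - {0}) \<and> (\<forall>s\<in>inv_B B - {0}. left_nonzero_divisor s)"
      then obtain y b where y: "y \<in> inv_B B - {0}" "b * s = y * u"
        using s unfolding left_permutable_def by blast
      have "y * u \<in> N" using y(2) sub_ideal[OF N(1) s(2)] by metis
      then show False using key y(1) by blast
    qed
  qed
  have "(UNIV::'a set) \<noteq> {0}" using one by (metis UNIV_I singletonD)
  then show ?thesis unfolding critically_compressible_def using part1 part2 by blast
qed

end
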